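(* (Perfect ciphertext blindness of SymmetricBlind against the Decryptor.) In the probabilistic model described in the context, for all $m\in\mathbb{Z}_p$, $c'\in\mathbb{Z}_p$ and $m'\in\mathbb{Z}_p$ with $\Pr[C'=c'\cap M'=m']>0$, $$\Pr[M=m\mid C'=c'\cap M'=m']=\Pr[M=m].$$
   Context: Let $p\ge5$ be a prime; $\mathbb{Z}_n=\{0,\dots,n-1\}$ and $x\bmod n$ is the least nonnegative residue. 2PAD: key $(x_k,y_k)\in\mathbb{Z}_p^2$; encrypting $m\in\mathbb{Z}_p$ with randomness $z\in\mathbb{Z}_p\setminus\{0\}$ gives $c=(p x_k z^2+p y_k z+pm+z)\bmod p^2$; decrypting $c\in\mathbb{Z}_{p^2}$: $z=c\bmod p$, $t=(-p x_k z^2-p y_k z+c)\bmod p^2$, output $(t-z)/p$. Probabilistic model of the blind decryption in the scheme SymmetricBlind with $1\le L\le p-1$: the key $(X,Y)$ has $X,Y$ independent and uniform on $\mathbb{Z}_p$; $M_1,\dots,M_L$ are arbitrary jointly distributed random plaintexts in $\mathbb{Z}_p$; the encryption randomness $(z_1,\dots,z_L)$ consists of pairwise distinct elements of $\mathbb{Z}_p\setminus\{0\}$, each $z_j$ being (marginally) uniform on $\mathbb{Z}_p\setminus\{0\}$ (e.g. $(z_1,\dots,z_L)$ uniform over all tuples of distinct nonzero residues); $C_j$ is the 2PAD encryption of $M_j$ under $(X,Y)$ with randomness $z_j$; Alice's chosen index $I\in\{1,\dots,L\}$ is a random variable; and the three families $(X,Y)$, $(z_1,\dots,z_L)$, $(I,M_1,\dots,M_L)$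 are mutually independent. Alice sends $C'=C_I\bmod p$ to the Decryptor, who replies $M'=\mathrm{Dec}_{2PAD}(X,Y,C')$; Alice's output is $M=((C_I-C'+pM')\bmod p^2)/p$ (which equals $M_I$). (The ciphertexts $C_1,\dots,C_L$ are assumed hidden from the Decryptor.) *)

theory Defs
  imports "HOL-Probability.Probability" "HOL-Computational_Algebra.Primes"
begin

text \<open>2PAD encryption and decryption; residues are represented as integers
  (least nonnegative residues via \<open>mod\<close>).\<close>

definition enc2pad :: "int \<Rightarrow> int \<Rightarrow> int \<Rightarrow> int \<Rightarrow> int \<Rightarrow> int" where
  "enc2pad p xk yk z m = (p * xk * z^2 + p * yk * z + p * m + z) mod p^2"

definition dec2pad :: "int \<Rightarrow> int \<Rightarrow> int \<Rightarrow> int \<Rightarrow> int" where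
  "dec2pad p xk yk c =
     (let z = c mod p;
          t = (- p * xk * z^2 - p * yk * z + c) mod p^2
      in (t - z) div p)"

text \<open>Sample space: \<open>((X,Y),(zs,(I,Ms)))\<close>, where \<open>zs j\<close> is the encryption
  randomness and \<open>Ms j\<close> the plaintext of index \<open>j \<in> {1..L}\<close>.\<close>

type_synonym outcome = "(int \<times> int) \<times> ((nat \<Rightarrow> int) \<times> (nat \<times> (nat \<Rightarrow> int)))"

definition ctI :: "int \<Rightarrow> outcome \<Rightarrow> int" where
  "ctI p \<omega> = (case \<omega> of ((x, y), (zs, (i, ms))) \<Rightarrow> enc2pad p x y (zs i) (ms i))"

definition Cq :: "int \<Rightarrow> outcome \<Rightarrow> int" where
  "Cq p \<omega> = ctI p \<omega> mod p"

definition Mr :: "int \<Rightarrow> outcome \<Rightarrow> int" where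
  "Mr p \<omega> = (case \<omega> of ((x, y), _) \<Rightarrow> dec2pad p x y (Cq p \<omega>))"

definition Mout :: "int \<Rightarrow> outcome \<Rightarrow> int" where
  "Mout p \<omega> = ((ctI p \<omega> - Cq p \<omega> + p * Mr p \<omega>) mod p^2) div p"

end

theory Submission
  imports Defs
begin

lemma emeasure_pair_pmf_slice:
  "emeasure (pair_pmf M N) S = (\<integral>\<^sup>+a. emeasure N {b. (a,b) \<in> S} \<partial>M)"
proof -
  have "\<And>a. (\<integral>\<^sup>+b. indicator S (a, b) \<partial>N) = emeasure N {b. (a,b) \<in> S}"
  proof -
    fix a
    have "(\<integral>\<^sup>+b. indicator S (a, b) \<partial>N) = (\<integral>\<^sup>+b. indicator {b. (a,b) \<in> S} b \<partial>N)"
      by (rule nn_integral_cong) (simp add: indicator_def)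
    also have "\<dots> = emeasure N {b. (a,b) \<in> S}" by simp
    finally show "(\<integral>\<^sup>+b. indicator S (a, b) \<partial>N) = emeasure N {b. (a,b) \<in> S}" .
  qed
  then show ?thesis by (simp add: pair_pmf_def)
qed

lemma emeasure_pair_pmf_prod:
  "emeasure (pair_pmf M N) (A \<times> B) = emeasure M A * emeasure N B"
proof -
  have "emeasure (pair_pmf M N) (A \<times> B) = (\<integral>\<^sup>+a. emeasure N B * indicator A a \<partial>M)"
    by (subst emeasure_pair_pmf_slice) (auto intro!: nn_integral_cong split: split_indicator)
  also have "\<dots> = emeasure N B * emeasure M A"
    by (subst nn_integral_cmult) auto
  finally show ?thesis by (simp add: mult.commute)
qed

lemma measure_pair_pmf_prod:
  "measure_pmf.prob (pair_pmf M N) (A \<times> B) = measure_pmf.prob M A * measure_pmf.prob N B"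
  using emeasure_pair_pmf_prod[of M N A B]
  by (simp add: Sigma_Algebra.measure_def enn2real_mult)

lemma mod_sq:
  fixes p a z :: int assumes "0 \<le> z" "z < p"
  shows "(p*a + z) mod p^2 = p*(a mod p) + z"
proof -
  have p0: "p > 0" using assms by simp
  define q where "q = a div p"
  define r where "r = a mod p"
  have h: "a = p*q + r" unfolding q_def r_def by simp
  have e: "p*a + z = (p*r + z) + q * p^2"
    unfolding h by (simp add: power2_eq_square algebra_simps)
  have r0: "0 \<le> r" "r \<le> p - 1" unfolding r_def using p0 pos_mod_bound[of p a] by auto
  have "p*r \<le> p*(p-1)" using p0 r0 by (simp add: mult_left_mono)
  then have lt: "p*r + z < p^2" using assms by (simp add: power2_eq_square algebra_simps)
  have ge: "0 \<le> p*r + z" using assms p0 r0 by simp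
  have "(p*a + z) mod p^2 = (p*r + z) mod p^2" unfolding e by (rule mod_mult_self1)
  also have "\<dots> = p*r + z" using lt ge by (rule_tac mod_pos_pos_trivial) auto
  finally show ?thesis unfolding r_def .
qed

lemma omega_facts:
  fixes p x y :: int and zs ms :: "nat \<Rightarrow> int" and i :: nat
  assumes z: "zs i \<in> {1..<p}" and mi: "ms i \<in> {0..<p}"
  shows "Cq p ((x,y),(zs,(i,ms))) = zs i"
    and "Mr p ((x,y),(zs,(i,ms))) = (-(x*(zs i)^2 + y*(zs i))) mod p"
    and "Mout p ((x,y),(zs,(i,ms))) = ms i"
proof -
  define z where "z = zs i"
  define K where "K = x*z^2 + y*z + ms i"
  have z0: "0 \<le> z" "z < p" using z z_def by auto
  have ct: "ctI p ((x,y),(zs,(i,ms))) = p*(K mod p) + z"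
    unfolding ctI_def enc2pad_def using mod_sq[OF z0, of K]
    by (simp add: K_def z_def algebra_simps)
  show cq: "Cq p ((x,y),(zs,(i,ms))) = zs i"
    unfolding Cq_def ct using z0 z_def by simp
  define a where "a = -(x*z^2 + y*z)"
  have t: "(- p * x * z^2 - p * y * z + z) mod p^2 = p*(a mod p) + z"
    using mod_sq[OF z0, of a] by (simp add: a_def algebra_simps)
  have zm: "z mod p = z" using z0 by simp
  show mr: "Mr p ((x,y),(zs,(i,ms))) = (-(x*(zs i)^2 + y*(zs i))) mod p"
  proof -
    have e: "- (p * x * z^2) - p * y * z + z = p*a + z" by (simp add: a_def algebra_simps)
    have "((- (p * x * z^2) - p * y * z + z) mod p^2 - z) div p = a mod p"
      unfolding e mod_sq[OF z0] using z0 by simp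
    then show ?thesis
      unfolding Mr_def dec2pad_def cq Let_def z_def[symmetric] zm
      by (simp add: a_def)
  qed
  have p0: "p > 0" using z0 by simp
  have "ctI p ((x,y),(zs,(i,ms))) - Cq p ((x,y),(zs,(i,ms))) + p * Mr p ((x,y),(zs,(i,ms)))
        = p * (K mod p + a mod p)"
    using ct cq mr by (simp add: a_def z_def algebra_simps)
  moreover have "(p * (K mod p + a mod p)) mod p^2 = p * ((K mod p + a mod p) mod p)"
    using mod_sq[of 0 p] p0 by simp
  moreover have "(K mod p + a mod p) mod p = ms i mod p"
    by (simp add: K_def a_def mod_add_eq)
  ultimately show "Mout p ((x,y),(zs,(i,ms))) = ms i"
    unfolding Mout_def using p0 mi by simp
qed

theorem proposition3:
  fixes p :: int and L :: nat
    and Z :: "(nat \<Rightarrow> int) pmf"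
    and IM :: "(nat \<times> (nat \<Rightarrow> int)) pmf"
    and m c' m' :: int
  assumes "prime p" and "p \<ge> 5"
    and "1 \<le> L" and "int L \<le> p - 1"
    and Z_distinct: "\<And>zs. zs \<in> set_pmf Z \<Longrightarrow> inj_on zs {1..L}"
    and Z_nonzero: "\<And>zs j. zs \<in> set_pmf Z \<Longrightarrow> j \<in> {1..L} \<Longrightarrow> zs j \<in> {1..<p}"
    and Z_uniform: "\<And>j. j \<in> {1..L} \<Longrightarrow> map_pmf (\<lambda>zs. zs j) Z = pmf_of_set {1..<p}"
    and IM_range: "\<And>i ms. (i, ms) \<in> set_pmf IM \<Longrightarrow>
                     i \<in> {1..L} \<and> (\<forall>j\<in>{1..L}. ms j \<in> {0..<p})"
    and "m \<in> {0..<p}" and "c' \<in> {0..<p}" and "m' \<in> {0..<p}"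
  defines "\<Omega> \<equiv> pair_pmf (pmf_of_set ({0..<p} \<times> {0..<p})) (pair_pmf Z IM)"
  assumes pos: "measure_pmf.prob \<Omega> {\<omega>. Cq p \<omega> = c' \<and> Mr p \<omega> = m'} > 0"
  shows "measure_pmf.prob \<Omega> {\<omega>. Mout p \<omega> = m \<and> Cq p \<omega> = c' \<and> Mr p \<omega> = m'}
           / measure_pmf.prob \<Omega> {\<omega>. Cq p \<omega> = c' \<and> Mr p \<omega> = m'}
         = measure_pmf.prob \<Omega> {\<omega>. Mout p \<omega> = m}"
proof -
  have p0: "p > 0" using assms(2) by simp
  define U where "U = pmf_of_set ({0..<p} \<times> {0..<p})"
  have setU: "set_pmf U = {0..<p} \<times> {0..<p}" unfolding U_def using p0
    by (subst set_pmf_of_set) auto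
  have setO: "set_pmf \<Omega> = set_pmf U \<times> (set_pmf Z \<times> set_pmf IM)"
    unfolding \<Omega>_def U_def by simp
  have ev: "measure_pmf.prob \<Omega> E = measure_pmf.prob \<Omega> F"
    if "\<And>\<omega>. \<omega> \<in> set_pmf \<Omega> \<Longrightarrow> \<omega> \<in> E \<longleftrightarrow> \<omega> \<in> F" for E F
  proof -
    have "E \<inter> set_pmf \<Omega> = F \<inter> set_pmf \<Omega>" using that by blast
    then show ?thesis by (metis measure_Int_set_pmf)
  qed
  have facts: "Cq p \<omega> = zs i \<and> Mr p \<omega> = (-(x*(zs i)^2 + y*(zs i))) mod p \<and> Mout p \<omega> = ms i"
    if "\<omega> \<in> set_pmf \<Omega>" "\<omega> = ((x,y),(zs,(i,ms)))" for \<omega> x y zs i ms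
  proof -
    have "zs \<in> set_pmf Z" "(i,ms) \<in> set_pmf IM" using that setO by auto
    then have "zs i \<in> {1..<p}" "ms i \<in> {0..<p}" using Z_nonzero IM_range by auto
    then show ?thesis using omega_facts that(2) by blast
  qed
  define A where "A = {(x,y). (-(x*c'^2 + y*c')) mod p = m'}"
  define C where "C = {v :: nat \<times> (nat \<Rightarrow> int). snd v (fst v) = m}"
  define B1 where "B1 = {w :: (nat \<Rightarrow> int) \<times> nat \<times> (nat \<Rightarrow> int). snd w \<in> C \<and> fst w (fst (snd w)) = c'}"
  define B2 where "B2 = {w :: (nat \<Rightarrow> int) \<times> nat \<times> (nat \<Rightarrow> int). snd w \<in> UNIV \<and> fst w (fst (snd w)) = c'}"
  have E1: "measure_pmf.prob \<Omega> {\<omega>. Mout p \<omega> = m \<and> Cq p \<omega> = c' \<and> Mr p \<omega> = m'} = measure_pmf.prob \<Omega> (A \<times> B1)"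
    by (rule ev) (auto simp: A_def B1_def C_def dest!: facts)
  have E2: "measure_pmf.prob \<Omega> {\<omega>. Cq p \<omega> = c' \<and> Mr p \<omega> = m'} = measure_pmf.prob \<Omega> (A \<times> B2)"
    by (rule ev) (auto simp: A_def B2_def dest!: facts)
  have E3: "measure_pmf.prob \<Omega> {\<omega>. Mout p \<omega> = m} = measure_pmf.prob \<Omega> (UNIV \<times> (UNIV \<times> C))"
    by (rule ev) (auto simp: C_def dest!: facts)
  define k where "k = emeasure (pmf_of_set {1..<p}) {c'}"
  have slice: "emeasure (pair_pmf Z IM) {w. snd w \<in> D \<and> fst w (fst (snd w)) = c'} = k * emeasure IM D" for D
  proof -
    have "emeasure (pair_pmf Z IM) {w. snd w \<in> D \<and> fst w (fst (snd w)) = c'}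
        = emeasure (pair_pmf IM Z) {w. fst w \<in> D \<and> snd w (fst (fst w)) = c'}"
      by (subst pair_commute_pmf) (simp add: vimage_def case_prod_beta)
    also have "\<dots> = (\<integral>\<^sup>+v. emeasure Z {zs. v \<in> D \<and> zs (fst v) = c'} \<partial>IM)"
      by (subst emeasure_pair_pmf_slice) simp
    also have "\<dots> = (\<integral>\<^sup>+v. k * indicator D v \<partial>IM)"
    proof (rule nn_integral_cong_AE, unfold AE_measure_pmf_iff, intro ballI)
      fix v assume v: "v \<in> set_pmf IM"
      obtain i ms where vi: "v = (i, ms)" by fastforce
      have i: "i \<in> {1..L}" using IM_range v vi by blast
      have "emeasure Z {zs. zs i = c'} = k"
        unfolding k_def Z_uniform[OF i, symmetric] by (simp add: vimage_def)
      then show "emeasure Z {zs. v \<in> D \<and> zs (fst v) = c'} = k * indicator D v"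
        by (cases "v \<in> D") (auto simp: vi)
    qed
    also have "\<dots> = k * emeasure IM D" by (subst nn_integral_cmult) auto
    finally show ?thesis .
  qed
  have "emeasure (pair_pmf Z IM) B1 = emeasure (pair_pmf Z IM) B2 * emeasure (pair_pmf Z IM) (UNIV \<times> C)"
    unfolding B1_def B2_def slice emeasure_pair_pmf_prod by simp
  then have key: "measure_pmf.prob (pair_pmf Z IM) B1 = measure_pmf.prob (pair_pmf Z IM) B2 * measure_pmf.prob (pair_pmf Z IM) (UNIV \<times> C)"
    by (simp add: Sigma_Algebra.measure_def enn2real_mult)
  have PA: "measure_pmf.prob U A > 0" "measure_pmf.prob (pair_pmf Z IM) B2 > 0"
  proof -
    have "0 < measure_pmf.prob \<Omega> (A \<times> B2)" using pos E2 by simp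
    then have "0 < measure_pmf.prob U A * measure_pmf.prob (pair_pmf Z IM) B2"
      unfolding \<Omega>_def U_def[symmetric] measure_pair_pmf_prod .
    then show "measure_pmf.prob U A > 0" "measure_pmf.prob (pair_pmf Z IM) B2 > 0"
      by (auto simp: zero_less_mult_iff)
  qed
  show ?thesis
  proof -
    have "measure_pmf.prob \<Omega> (A \<times> B1) / measure_pmf.prob \<Omega> (A \<times> B2) = measure_pmf.prob \<Omega> (UNIV \<times> (UNIV \<times> C))"
      unfolding \<Omega>_def U_def[symmetric] measure_pair_pmf_prod key
      using PA by simp
    then show ?thesis using E1 E2 E3 by simp
  qed
qed

end
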